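(* Let $A_1,A_2,A_3$ be finite subsets of $\mathbb{R}$ with $|A_1|\le|A_2|\le|A_3|$. Let $\mathcal{L}$ be the set of lines $l$ in $\mathbb{R}^2$ that contain three distinct points $u_1,u_2,u_3$ with $u_i\in A_i\times A_i$ ($i=1,2,3$). For $l\in\mathcal{L}$ put $\alpha_{i,l}=|l\cap(A_i\times A_i)|$, and let $\mathcal{L}_{i,2}=\{l\in\mathcal{L}:\alpha_{i,l}\ge 2\}$. Then for every $i\in\{1,2,3\}$ and every real $1\le p\le 3$, \[ \sum_{l\in\mathcal{L}_{i,2}}\alpha_{i,l}^{\,p}\lesssim |A_1|^{3-p}|A_i|^{p+1}. \]
   Context: Notation: $X\lesssim Y$ means $X\le C\,Y(\log(2+N))^{c}$ for some absolute constants $C,c>0$, where $N$ is the largest cardinality of the finite sets in the statement. *)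

theory Defs
  imports Complex_Main
begin

definition is_line :: "(real \<times> real) set \<Rightarrow> bool" where
  "is_line l \<longleftrightarrow> (\<exists>a b c. (a, b) \<noteq> (0, 0) \<and> l = {(x, y). a * x + b * y = c})"

definition rich_lines :: "(nat \<Rightarrow> real set) \<Rightarrow> (real \<times> real) set set" where
  "rich_lines A = {l. is_line l \<and> (\<exists>u1 u2 u3. u1 \<in> l \<and> u2 \<in> l \<and> u3 \<in> l \<and>
      u1 \<in> A 1 \<times> A 1 \<and> u2 \<in> A 2 \<times> A 2 \<and> u3 \<in> A 3 \<times> A 3 \<and>
      u1 \<noteq> u2 \<and> u1 \<noteq> u3 \<and> u2 \<noteq> u3)}"

definition alpha :: "(nat \<Rightarrow> real set) \<Rightarrow> nat \<Rightarrow> (real \<times> real) set \<Rightarrow> nat" where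
  "alpha A i l = card (l \<inter> (A i \<times> A i))"

definition rich_lines2 :: "(nat \<Rightarrow> real set) \<Rightarrow> nat \<Rightarrow> (real \<times> real) set set" where
  "rich_lines2 A i = {l \<in> rich_lines A. alpha A i l \<ge> 2}"

end

theory Submission
  imports Defs "HOL-Analysis.Harmonic_Numbers"
begin


definition rk :: "real set \<Rightarrow> real \<Rightarrow> nat" where
  "rk A x = card {y\<in>A. y < x}"

lemma rk_mono: "finite A \<Longrightarrow> x \<le> y \<Longrightarrow> rk A x \<le> rk A y"
  unfolding rk_def by (rule card_mono) auto

lemma rk_strict: "finite A \<Longrightarrow> x \<in> A \<Longrightarrow> x < y \<Longrightarrow> rk A x < rk A y"
proof -
  assume f: "finite A" and x: "x \<in> A" and xy: "x < y"
  have "insert x {z\<in>A. z < x} \<subseteq> {z\<in>A. z < y}" using x xy by auto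
  moreover have "x \<notin> {z\<in>A. z < x}" by auto
  ultimately have "Suc (card {z\<in>A. z < x}) \<le> card {z\<in>A. z < y}"
    using f by (metis (no_types, lifting) card_insert_disjoint card_mono finite_subset mem_Collect_eq subsetI)
  thus ?thesis unfolding rk_def by simp
qed

lemma rk_less: "finite A \<Longrightarrow> rk A x \<le> card A"
  unfolding rk_def by (rule card_mono) auto

lemma rk_lt: "finite A \<Longrightarrow> x \<in> A \<Longrightarrow> rk A x < card A"
  unfolding rk_def by (rule psubset_card_mono) auto

lemma rk_inj: "finite A \<Longrightarrow> inj_on (rk A) A"
  by (rule inj_onI) (metis linorder_neqE_linordered_idom nat_neq_iff rk_strict)

lemma harm_split:
  fixes i0 n :: nat assumes "i0 < n"
  shows "(\<Sum>i<n. 1 / (\<bar>real i - real i0\<bar> + 1)) \<le> 2 * (\<Sum>k<n. 1 / (real k + 1))"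
proof -
  let ?f = "\<lambda>i::nat. 1 / (\<bar>real i - real i0\<bar> + 1)"
  let ?g = "\<lambda>k::nat. 1 / (real k + 1)"
  have split: "{..<n} = {i\<in>{..<n}. i \<le> i0} \<union> {i\<in>{..<n}. i0 < i}" by auto
  have s: "(\<Sum>i<n. ?f i) = (\<Sum>i\<in>{i\<in>{..<n}. i \<le> i0}. ?f i) + (\<Sum>i\<in>{i\<in>{..<n}. i0 < i}. ?f i)"
    by (subst split, rule sum.union_disjoint) auto
  have a: "(\<Sum>i\<in>{i\<in>{..<n}. i \<le> i0}. ?f i) \<le> (\<Sum>k<n. ?g k)"
  proof -
    have "(\<Sum>i\<in>{i\<in>{..<n}. i \<le> i0}. ?f i) = (\<Sum>i\<in>{i\<in>{..<n}. i \<le> i0}. ?g (i0 - i))"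
      by (rule sum.cong) (auto simp: of_nat_diff)
    also have "\<dots> = (\<Sum>k\<in>(\<lambda>i. i0 - i) ` {i\<in>{..<n}. i \<le> i0}. ?g k)"
      by (rule sum.reindex[symmetric, unfolded comp_def]) (auto simp: inj_on_def)
    also have "\<dots> \<le> (\<Sum>k<n. ?g k)"
      by (rule sum_mono2) (use assms in auto)
    finally show ?thesis .
  qed
  have b: "(\<Sum>i\<in>{i\<in>{..<n}. i0 < i}. ?f i) \<le> (\<Sum>k<n. ?g k)"
  proof -
    have "(\<Sum>i\<in>{i\<in>{..<n}. i0 < i}. ?f i) \<le> (\<Sum>i\<in>{i\<in>{..<n}. i0 < i}. ?g (i - i0 - 1))"
      by (rule sum_mono) (auto simp: of_nat_diff frac_le)
    also have "\<dots> = (\<Sum>k\<in>(\<lambda>i. i - i0 - 1) ` {i\<in>{..<n}. i0 < i}. ?g k)"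
      by (rule sum.reindex[symmetric, unfolded comp_def]) (auto simp: inj_on_def)
    also have "\<dots> \<le> (\<Sum>k<n. ?g k)"
      by (rule sum_mono2) auto
    finally show ?thesis .
  qed
  show ?thesis using s a b by linarith
qed

lemma harm_le: "n > 0 \<Longrightarrow> (\<Sum>k<n. 1 / (real k + 1)) \<le> 1 + ln (real n)"
proof -
  assume "n > 0"
  have "(\<Sum>k<n. 1 / (real k + 1)) = harm n"
    by (simp add: harm_altdef divide_inverse add.commute)
  moreover have "harm n - ln (real n) \<le> harm 1 - ln (real (1::nat))"
    using euler_mascheroni_sequence_decreasing[of 1 n] \<open>n>0\<close> by simp
  moreover have "harm 1 = (1::real)" by (simp add: harm_def)
  ultimately show ?thesis by simp
qed




lemma pairs_count:
  assumes "finite S"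
  shows "card S \<le> card {(x,y)\<in>S\<times>S. x\<noteq>y \<and> f x = f y} + card (f ` S)"
  using assms
proof (induction S rule: finite_induct)
  case empty then show ?case by simp
next
  case (insert a F)
  let ?Q = "\<lambda>S. {(x,y)\<in>S\<times>S. x\<noteq>y \<and> f x = f y}"
  have fin: "finite (?Q (insert a F))" by (rule finite_subset[of _ "insert a F \<times> insert a F"]) (use insert(1) in auto)
  have sub: "?Q F \<subseteq> ?Q (insert a F)" by auto
  show ?case
  proof (cases "f a \<in> f ` F")
    case True
    then obtain b where b: "b \<in> F" "f b = f a" by auto
    have "(a,b) \<in> ?Q (insert a F)" "(a,b) \<notin> ?Q F" using b insert(2) by auto
    hence "insert (a,b) (?Q F) \<subseteq> ?Q (insert a F)" using sub by auto
    hence "card (insert (a,b) (?Q F)) \<le> card (?Q (insert a F))" using fin by (rule card_mono[rotated])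
    moreover have "card (insert (a,b) (?Q F)) = Suc (card (?Q F))"
      using \<open>(a,b) \<notin> ?Q F\<close> fin sub by (meson card_insert_disjoint finite_subset)
    moreover have "f ` insert a F = f ` F" using True by auto
    ultimately show ?thesis using insert by simp
  next
    case False
    have "card (f ` insert a F) = Suc (card (f ` F))" using False insert(1) by simp
    moreover have "card (?Q F) \<le> card (?Q (insert a F))" using fin sub by (rule card_mono)
    ultimately show ?thesis using insert by simp
  qed
qed

lemma block_bound:
  fixes s :: "'a \<Rightarrow> int" and L :: int and M :: nat
  assumes fin: "finite S" and inj: "inj_on s S" and rng: "\<forall>x\<in>S. L \<le> s x \<and> s x < L + int M"
    and two: "card S \<ge> 2"
  shows "real (card S) ^ 3 \<le> 36 * real M ^ 2 *
     (\<Sum>z\<in>{(x,y)\<in>S\<times>S. x\<noteq>y}. 1 / (real_of_int \<bar>s (fst z) - s (snd z)\<bar> + 1) ^ 2)"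
proof -
  define a where "a = card S"
  define ofs where "ofs x = nat (s x - L)" for x
  have oM: "ofs x < M" if "x \<in> S" for x using rng that unfolding ofs_def by auto
  have oeq: "s x - s y = int (ofs x) - int (ofs y)" if "x \<in> S" "y \<in> S" for x y
    using rng that unfolding ofs_def by auto
  have oinj: "inj_on ofs S" using inj unfolding inj_on_def
    by (metis oeq diff_self eq_iff_diff_eq_0)
  have "ofs ` S \<subseteq> {..<M}" using oM by auto
  hence "card (ofs ` S) \<le> M" by (metis card_lessThan card_mono finite_lessThan)
  hence aM: "a \<le> M" using card_image[OF oinj] by (simp add: a_def)
  have a2: "a \<ge> 2" using two a_def by simp
  define t where "t = (2 * M + a - 1) div a"
  have ta: "2 * M \<le> t * a"
  proof -
    have e: "2 * M + a - 1 = t * a + (2*M + a - 1) mod a" unfolding t_def by simp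
    have "(2*M + a - 1) mod a < a" using a2 by simp
    thus ?thesis using e a2 by linarith
  qed
  have ta2: "t * a \<le> 2 * M + a - 1" unfolding t_def by (simp add: div_times_less_eq_dividend)
  have t1: "t \<ge> 1"
  proof (rule ccontr)
    assume "\<not> t \<ge> 1" hence "t = 0" by simp
    thus False using ta a2 aM by simp
  qed
  have t3: "real t * real a \<le> 3 * real M"
  proof -
    have "t * a \<le> 3 * M" using ta2 aM by linarith
    hence "real (t * a) \<le> real (3 * M)" by (simp only: of_nat_le_iff)
    thus ?thesis by simp
  qed
  define blk where "blk x = ofs x div t" for x
  define B where "B = (M - 1) div t + 1"
  have blkS: "blk ` S \<subseteq> {..<B}"
  proof
    fix j assume "j \<in> blk ` S"
    then obtain x where x: "x \<in> S" "j = blk x" by auto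
    have "ofs x \<le> M - 1" using oM[OF x(1)] by simp
    hence "ofs x div t \<le> (M - 1) div t" by (rule div_le_mono)
    thus "j \<in> {..<B}" using x unfolding blk_def B_def by simp
  qed
  have cardB: "card (blk ` S) \<le> B" using blkS by (metis card_lessThan card_mono finite_lessThan)
  have B2: "2 * B \<le> a + 1"
  proof -
    have "((M - 1) div t) * t \<le> M - 1" by (simp add: div_times_less_eq_dividend)
    hence "B * t \<le> M - 1 + t" unfolding B_def by (simp add: algebra_simps)
    hence "2 * B * t \<le> 2 * M - 2 + 2 * t" using aM a2 by linarith
    moreover have "(a + 2) * t = t * a + 2 * t" by (simp add: algebra_simps)
    moreover have "M \<ge> 1" using aM a2 by simp
    ultimately have "2 * B * t < (a + 2) * t" using ta t1 by linarith
    hence "2 * B < a + 2" by (simp only: mult_less_cancel2)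
    thus ?thesis by simp
  qed
  define Q where "Q = {(x,y)\<in>S\<times>S. x\<noteq>y \<and> blk x = blk y}"
  have "a \<le> card Q + card (blk ` S)" unfolding a_def Q_def by (rule pairs_count[OF fin])
  hence Qa: "real a - 1 \<le> 2 * real (card Q)" using cardB B2 by linarith
  have finQ: "finite Q" unfolding Q_def by (rule finite_subset[of _ "S \<times> S"]) (use fin in auto)
  have finP: "finite {(x,y)\<in>S\<times>S. x\<noteq>y}" by (rule finite_subset[of _ "S \<times> S"]) (use fin in auto)
  have Qw: "1 / real t ^ 2 \<le> 1 / (real_of_int \<bar>s (fst z) - s (snd z)\<bar> + 1) ^ 2" if zQ: "z \<in> Q" for z
  proof -
    obtain x y where z: "z = (x,y)" "x \<in> S" "y \<in> S" "blk x = blk y" by (cases z) (use zQ in \<open>auto simp: Q_def\<close>)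
    have "ofs x = blk x * t + ofs x mod t" "ofs y = blk y * t + ofs y mod t" unfolding blk_def by simp_all
    moreover have "ofs x mod t < t" "ofs y mod t < t" using t1 by simp_all
    ultimately have e: "int (ofs x) = int (blk x * t) + int (ofs x mod t)" "int (ofs y) = int (blk x * t) + int (ofs y mod t)"
      "int (ofs x mod t) < int t" "int (ofs y mod t) < int t" using z(4) by (metis of_nat_add, metis of_nat_add, simp, simp)
    hence "\<bar>int (ofs x) - int (ofs y)\<bar> \<le> int t - 1" by linarith
    hence "\<bar>s x - s y\<bar> + 1 \<le> int t" using oeq[OF z(2,3)] by simp
    hence "real_of_int \<bar>s x - s y\<bar> + 1 \<le> real t" by (metis of_int_le_iff of_int_add of_int_of_nat_eq of_int_1)
    hence "(real_of_int \<bar>s x - s y\<bar> + 1) ^ 2 \<le> real t ^ 2" by (intro power_mono) auto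
    thus ?thesis using z(1) by (intro divide_left_mono) auto
  qed
  have "real (card Q) * (1 / real t ^ 2) = (\<Sum>z\<in>Q. 1 / real t ^ 2)" by simp
  also have "\<dots> \<le> (\<Sum>z\<in>Q. 1 / (real_of_int \<bar>s (fst z) - s (snd z)\<bar> + 1) ^ 2)"
    by (rule sum_mono) (rule Qw)
  also have "\<dots> \<le> (\<Sum>z\<in>{(x,y)\<in>S\<times>S. x\<noteq>y}. 1 / (real_of_int \<bar>s (fst z) - s (snd z)\<bar> + 1) ^ 2)"
    by (rule sum_mono2) (use finP in \<open>auto simp: Q_def\<close>)
  finally have main: "real (card Q) / real t ^ 2 \<le> (\<Sum>z\<in>{(x,y)\<in>S\<times>S. x\<noteq>y}. 1 / (real_of_int \<bar>s (fst z) - s (snd z)\<bar> + 1) ^ 2)"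
    by simp
  have tpos: "real t > 0" using t1 by simp
  have "real a ^ 3 \<le> 36 * real M ^ 2 * (real (card Q) / real t ^ 2)"
  proof -
    have "(real t * real a) ^ 2 \<le> (3 * real M) ^ 2" using t3 by (intro power_mono) auto
    hence h1: "real t ^ 2 * real a ^ 2 \<le> 9 * real M ^ 2" by (simp add: power_mult_distrib)
    have h2: "real a \<le> 4 * real (card Q)" using Qa a2 by linarith
    have "real a ^ 3 * real t ^ 2 = real a * (real t ^ 2 * real a ^ 2)" by (simp add: power3_eq_cube power2_eq_square)
    also have "\<dots> \<le> real a * (9 * real M ^ 2)" using h1 by (intro mult_left_mono) auto
    also have "\<dots> \<le> (4 * real (card Q)) * (9 * real M ^ 2)" using h2 by (intro mult_right_mono) auto
    finally have "real a ^ 3 * real t ^ 2 \<le> 36 * real M ^ 2 * real (card Q)" by (simp add: ac_simps)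
    thus ?thesis using tpos by (simp add: field_simps)
  qed
  also have "\<dots> \<le> 36 * real M ^ 2 * (\<Sum>z\<in>{(x,y)\<in>S\<times>S. x\<noteq>y}. 1 / (real_of_int \<bar>s (fst z) - s (snd z)\<bar> + 1) ^ 2)"
    using main by (intro mult_left_mono) auto
  finally show ?thesis unfolding a_def .
qed




lemma det_zero:
  fixes a b d1 d2 g1 g2 :: real
  assumes ab: "(a,b) \<noteq> (0,0)" and e1: "a * d1 + b * d2 = 0" and e2: "a * g1 + b * g2 = 0"
  shows "g1 * d2 - g2 * d1 = 0"
proof -
  have e1': "a * d1 = -(b * d2)" and e2': "a * g1 = -(b * g2)" using e1 e2 by linarith+
  have "a * (g1 * d2 - g2 * d1) = (a * g1) * d2 - g2 * (a * d1)" by (simp add: algebra_simps)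
  also have "\<dots> = (-(b * g2)) * d2 - g2 * (-(b * d2))" by (simp only: e1' e2')
  also have "\<dots> = 0" by (simp add: algebra_simps)
  finally have h1: "a * (g1 * d2 - g2 * d1) = 0" .
  have e1'': "b * d2 = -(a * d1)" and e2'': "b * g2 = -(a * g1)" using e1 e2 by linarith+
  have "b * (g1 * d2 - g2 * d1) = g1 * (b * d2) - d1 * (b * g2)" by (simp add: algebra_simps)
  also have "\<dots> = g1 * (-(a * d1)) - d1 * (-(a * g1))" by (simp only: e1'' e2'')
  also have "\<dots> = 0" by (simp add: algebra_simps)
  finally have h2: "b * (g1 * d2 - g2 * d1) = 0" .
  show ?thesis using h1 h2 ab by auto
qed

lemma par_zero:
  fixes a b d1 d2 g1 g2 :: real
  assumes d: "(d1,d2) \<noteq> (0,0)" and e1: "a * d1 + b * d2 = 0" and det: "g1 * d2 - g2 * d1 = 0"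
  shows "a * g1 + b * g2 = 0"
proof -
  have det': "g2 * d1 = g1 * d2" using det by simp
  have "d1 * (a * g1 + b * g2) = a * g1 * d1 + b * (g2 * d1)" by (simp add: algebra_simps)
  also have "\<dots> = g1 * (a * d1 + b * d2)" unfolding det' by (simp add: algebra_simps)
  also have "\<dots> = 0" using e1 by simp
  finally have h1: "d1 * (a * g1 + b * g2) = 0" .
  have "d2 * (a * g1 + b * g2) = a * (g1 * d2) + b * g2 * d2" by (simp add: algebra_simps)
  also have "\<dots> = g2 * (a * d1 + b * d2)" unfolding det'[symmetric] by (simp add: algebra_simps)
  also have "\<dots> = 0" using e1 by simp
  finally have h2: "d2 * (a * g1 + b * g2) = 0" .
  show ?thesis using h1 h2 d by auto
qed

lemma line_aux:
  fixes a b c a' b' c' :: real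
  assumes ab: "(a,b) \<noteq> (0,0)" and p: "a * p1+b * p2=c" and q: "a * q1+b * q2=c"
    and p': "a' * p1+b' * p2=c'" and q': "a' * q1+b' * q2=c'" and pq: "(p1,p2)\<noteq>(q1,q2)"
    and z: "a * x+b * y=c"
  shows "a' * x+b' * y=c'"
proof -
  have e1: "a * (q1-p1) + b * (q2-p2) = 0" using p q by (simp add: algebra_simps)
  have e2: "a * (x-p1) + b * (y-p2) = 0" using p z by (simp add: algebra_simps)
  have e3: "a' * (q1-p1) + b' * (q2-p2) = 0" using p' q' by (simp add: algebra_simps)
  have "(x-p1) * (q2-p2) - (y-p2) * (q1-p1) = 0" by (rule det_zero[OF ab e1 e2])
  moreover have "(q1-p1, q2-p2) \<noteq> (0,0)" using pq by auto
  ultimately have "a' * (x-p1) + b' * (y-p2) = 0" using par_zero e3 by blast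
  thus ?thesis using p' by (simp add: algebra_simps)
qed

lemma line_def': "is_line l \<Longrightarrow> \<exists>a b c. (a,b) \<noteq> (0,0) \<and> (\<forall>x y. (x,y) \<in> l \<longleftrightarrow> a * x+b * y=c)"
  unfolding is_line_def by auto

lemma line_sub:
  assumes "is_line l" "is_line l'" "p \<noteq> q" "p \<in> l" "q \<in> l" "p \<in> l'" "q \<in> l'"
  shows "l \<subseteq> l'"
proof
  obtain a b c where l: "(a,b) \<noteq> (0,0)" "\<And>x y. (x,y) \<in> l \<longleftrightarrow> a * x+b * y=c" using line_def'[OF assms(1)] by blast
  obtain a' b' c' where l': "\<And>x y. (x,y) \<in> l' \<longleftrightarrow> a' * x+b' * y=c'" using line_def'[OF assms(2)] by blast
  fix z assume "z \<in> l"
  obtain x y where z: "z = (x,y)" by (cases z)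
  obtain p1 p2 q1 q2 where pq: "p = (p1,p2)" "q = (q1,q2)" by (cases p, cases q)
  have h1: "a * p1+b * p2=c" using l(2) assms(4) pq(1) by blast
  have h2: "a * q1+b * q2=c" using l(2) assms(5) pq(2) by blast
  have h3: "a' * p1+b' * p2=c'" using l'(1) assms(6) pq(1) by blast
  have h4: "a' * q1+b' * q2=c'" using l'(1) assms(7) pq(2) by blast
  have h5: "a * x+b * y=c" using l(2) \<open>z \<in> l\<close> z by blast
  have h6: "(p1,p2) \<noteq> (q1,q2)" using assms(3) pq by simp
  have "a' * x+b' * y=c'" by (rule line_aux[OF l(1) h1 h2 h3 h4 h6 h5])
  thus "z \<in> l'" using l'(1) z by blast
qed

lemma line_two_points:
  assumes "is_line l" "is_line l'" "p \<noteq> q" "p \<in> l" "q \<in> l" "p \<in> l'" "q \<in> l'"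
  shows "l = l'"
  using line_sub[OF assms] line_sub[OF assms(2,1,3,6,7,4,5)] by blast

lemma line_sign:
  assumes "is_line l"
  shows "(\<forall>p\<in>l. \<forall>q\<in>l. (fst p - fst q) * (snd p - snd q) \<ge> 0) \<or> (\<forall>p\<in>l. \<forall>q\<in>l. (fst p - fst q) * (snd p - snd q) \<le> 0)"
proof -
  obtain a b c where l: "(a,b) \<noteq> (0,0)" "\<And>x y. (x,y) \<in> l \<longleftrightarrow> a * x+b * y=c" using line_def'[OF assms(1)] by blast
  have key: "a * (fst p - fst q) = -(b * (snd p - snd q))" if "p \<in> l" "q \<in> l" for p q
  proof -
    have "a * fst p + b * snd p = c" "a * fst q + b * snd q = c" using l(2)[of "fst p" "snd p"] l(2)[of "fst q" "snd q"] that by auto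
    thus ?thesis by (simp add: algebra_simps)
  qed
  show ?thesis
  proof (cases "a = 0")
    case True
    hence "b \<noteq> 0" using l(1) by auto
    hence z: "snd p - snd q = 0" if "p \<in> l" "q \<in> l" for p q using key[OF that] True by simp
    have "\<forall>p\<in>l. \<forall>q\<in>l. (fst p - fst q) * (snd p - snd q) \<ge> 0"
    proof (intro ballI)
      fix p q assume "p \<in> l" "q \<in> l"
      hence "snd p - snd q = 0" by (rule z)
      thus "(fst p - fst q) * (snd p - snd q) \<ge> 0" by (simp only: mult_zero_right order_refl)
    qed
    thus ?thesis by blast
  next
    case False
    have e: "fst p - fst q = -(b/a) * (snd p - snd q)" if "p \<in> l" "q \<in> l" for p q
      using key[OF that] False by (simp add: field_simps)
    define k where "k = -(b/a)"
    have pr: "(fst p - fst q) * (snd p - snd q) = k * (snd p - snd q)^2" if "p \<in> l" "q \<in> l" for p q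
      using e[OF that] unfolding k_def by (simp add: power2_eq_square)
    show ?thesis
    proof (cases "k \<ge> 0")
      case True
      hence "\<forall>p\<in>l. \<forall>q\<in>l. (fst p - fst q) * (snd p - snd q) \<ge> 0" using pr by simp
      thus ?thesis by blast
    next
      case False
      hence "\<forall>p\<in>l. \<forall>q\<in>l. (fst p - fst q) * (snd p - snd q) \<le> 0" using pr
        by (simp add: mult_nonpos_nonneg)
      thus ?thesis by blast
    qed
  qed
qed




definition wt :: "real set \<Rightarrow> (real \<times> real) \<times> (real \<times> real) \<Rightarrow> real" where
  "wt A z = 1 / ((real_of_int \<bar>int (rk A (fst (fst z))) - int (rk A (fst (snd z)))\<bar> + 1) *
                 (real_of_int \<bar>int (rk A (snd (fst z))) - int (rk A (snd (snd z)))\<bar> + 1))"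

lemma abs_add_same: "0 \<le> u * v \<Longrightarrow> \<bar>u + v\<bar> = \<bar>u\<bar> + \<bar>(v::int)\<bar>"
  by (auto simp: zero_le_mult_iff abs_if)

lemma abs_diff_opp: "u * v \<le> 0 \<Longrightarrow> \<bar>u - v\<bar> = \<bar>u\<bar> + \<bar>(v::int)\<bar>"
  by (auto simp: mult_le_0_iff abs_if)

lemma rank_sign_pos:
  assumes "finite A" "0 \<le> (x1 - x2) * (y1 - y2)"
  shows "0 \<le> (int (rk A x1) - int (rk A x2)) * (int (rk A y1) - int (rk A y2))"
proof -
  have "(0 \<le> x1 - x2 \<and> 0 \<le> y1 - y2) \<or> (x1 - x2 \<le> 0 \<and> y1 - y2 \<le> 0)" using assms(2) by (simp add: zero_le_mult_iff)
  thus ?thesis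
  proof
    assume h: "0 \<le> x1 - x2 \<and> 0 \<le> y1 - y2"
    have "rk A x2 \<le> rk A x1" "rk A y2 \<le> rk A y1" using h rk_mono[OF assms(1)] by auto
    thus ?thesis by simp
  next
    assume h: "x1 - x2 \<le> 0 \<and> y1 - y2 \<le> 0"
    have "rk A x1 \<le> rk A x2" "rk A y1 \<le> rk A y2" using h rk_mono[OF assms(1)] by auto
    thus ?thesis by (simp add: mult_nonpos_nonpos)
  qed
qed

lemma rank_sign_neg:
  assumes "finite A" "(x1 - x2) * (y1 - y2) \<le> 0"
  shows "(int (rk A x1) - int (rk A x2)) * (int (rk A y1) - int (rk A y2)) \<le> 0"
proof -
  have "(0 \<le> x1 - x2 \<and> y1 - y2 \<le> 0) \<or> (x1 - x2 \<le> 0 \<and> 0 \<le> y1 - y2)" using assms(2) by (simp add: mult_le_0_iff)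
  thus ?thesis
  proof
    assume h: "0 \<le> x1 - x2 \<and> y1 - y2 \<le> 0"
    have "rk A x2 \<le> rk A x1" "rk A y1 \<le> rk A y2" using h rk_mono[OF assms(1)] by auto
    thus ?thesis by (simp add: mult_nonneg_nonpos)
  next
    assume h: "x1 - x2 \<le> 0 \<and> 0 \<le> y1 - y2"
    have "rk A x1 \<le> rk A x2" "rk A y2 \<le> rk A y1" using h rk_mono[OF assms(1)] by auto
    thus ?thesis by (simp add: mult_nonpos_nonneg)
  qed
qed

lemma per_line:
  assumes fin: "finite A" and line: "is_line l" and two: "card (l \<inter> (A \<times> A)) \<ge> 2"
  shows "real (card (l \<inter> (A \<times> A))) ^ 3 \<le> 324 * real (card A) ^ 2 *
           (\<Sum>z\<in>{(x,y)\<in>(l \<inter> (A \<times> A))\<times>(l \<inter> (A \<times> A)). x\<noteq>y}. wt A z)"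
proof -
  define S where "S = l \<inter> (A \<times> A)"
  define n where "n = card A"
  define u where "u p q = int (rk A (fst p)) - int (rk A (fst q))" for p q :: "real \<times> real"
  define v where "v p q = int (rk A (snd p)) - int (rk A (snd q))" for p q :: "real \<times> real"
  obtain \<sigma> :: int where sig: "\<sigma> = 1 \<or> \<sigma> = -1"
    and sd: "\<And>p q. p \<in> S \<Longrightarrow> q \<in> S \<Longrightarrow> \<bar>u p q + \<sigma> * v p q\<bar> = \<bar>u p q\<bar> + \<bar>v p q\<bar>"
  proof -
    from line_sign[OF line] show ?thesis
    proof
      assume h: "\<forall>p\<in>l. \<forall>q\<in>l. (fst p - fst q) * (snd p - snd q) \<ge> 0"
      have "\<bar>u p q + 1 * v p q\<bar> = \<bar>u p q\<bar> + \<bar>v p q\<bar>" if "p \<in> S" "q \<in> S" for p q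
        using abs_add_same[OF rank_sign_pos[OF fin, of "fst p" "fst q" "snd p" "snd q"]] h that
        unfolding S_def u_def v_def by auto
      thus ?thesis using that[of 1] by auto
    next
      assume h: "\<forall>p\<in>l. \<forall>q\<in>l. (fst p - fst q) * (snd p - snd q) \<le> 0"
      have "\<bar>u p q + (-1) * v p q\<bar> = \<bar>u p q\<bar> + \<bar>v p q\<bar>" if "p \<in> S" "q \<in> S" for p q
        using abs_diff_opp[OF rank_sign_neg[OF fin, of "fst p" "fst q" "snd p" "snd q"]] h that
        unfolding S_def u_def v_def by auto
      thus ?thesis using that[of "-1"] by auto
    qed
  qed
  define s where "s p = int (rk A (fst p)) + \<sigma> * int (rk A (snd p))" for p
  have sdiff: "s p - s q = u p q + \<sigma> * v p q" for p q unfolding s_def u_def v_def by (simp add: algebra_simps)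
  have finS: "finite S" unfolding S_def using fin by auto
  have inj: "inj_on s S"
  proof (rule inj_onI)
    fix p q assume p: "p \<in> S" and q: "q \<in> S" and e: "s p = s q"
    have "\<bar>u p q\<bar> + \<bar>v p q\<bar> = 0" using sd[OF p q] sdiff[of p q] e by simp
    hence "rk A (fst p) = rk A (fst q)" "rk A (snd p) = rk A (snd q)" unfolding u_def v_def by auto
    moreover have "fst p \<in> A" "fst q \<in> A" "snd p \<in> A" "snd q \<in> A" using p q unfolding S_def by auto
    ultimately have "fst p = fst q" "snd p = snd q" using rk_inj[OF fin] unfolding inj_on_def by blast+
    thus "p = q" by (simp add: prod_eq_iff)
  qed
  have rng: "\<forall>x\<in>S. - int n \<le> s x \<and> s x < - int n + int (3 * n)"
  proof
    fix x assume x: "x \<in> S"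
    have "fst x \<in> A" "snd x \<in> A" using x unfolding S_def by auto
    hence "rk A (fst x) < n" "rk A (snd x) < n" using rk_lt[OF fin] unfolding n_def by auto
    thus "- int n \<le> s x \<and> s x < - int n + int (3 * n)" using sig unfolding s_def by auto
  qed
  have bb: "real (card S) ^ 3 \<le> 36 * real (3 * n) ^ 2 *
     (\<Sum>z\<in>{(x,y)\<in>S\<times>S. x\<noteq>y}. 1 / (real_of_int \<bar>s (fst z) - s (snd z)\<bar> + 1) ^ 2)"
    by (rule block_bound[OF finS inj rng]) (use two S_def in simp)
  have tm: "1 / (real_of_int \<bar>s (fst z) - s (snd z)\<bar> + 1) ^ 2 \<le> wt A z" if zS: "z \<in> {(x,y)\<in>S\<times>S. x\<noteq>y}" for z
  proof -
    obtain p q where z: "z = (p,q)" "p \<in> S" "q \<in> S" using zS by auto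
    define U where "U = real_of_int \<bar>u p q\<bar>"
    define V where "V = real_of_int \<bar>v p q\<bar>"
    have UV: "U \<ge> 0" "V \<ge> 0" unfolding U_def V_def by auto
    have e: "real_of_int \<bar>s (fst z) - s (snd z)\<bar> = U + V" using sd[OF z(2,3)] sdiff[of p q] z(1)
      unfolding U_def V_def by simp
    have w: "wt A z = 1 / ((U + 1) * (V + 1))" unfolding wt_def U_def V_def u_def v_def z(1) by simp
    have "(U + 1) * (V + 1) \<le> (U + V + 1) ^ 2" using UV by (simp add: power2_eq_square algebra_simps)
    moreover have "(U + 1) * (V + 1) > 0" using UV by simp
    ultimately show ?thesis unfolding e w using UV by (intro divide_left_mono) (auto intro!: mult_pos_pos)
  qed
  have "(\<Sum>z\<in>{(x,y)\<in>S\<times>S. x\<noteq>y}. 1 / (real_of_int \<bar>s (fst z) - s (snd z)\<bar> + 1) ^ 2)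
        \<le> (\<Sum>z\<in>{(x,y)\<in>S\<times>S. x\<noteq>y}. wt A z)" by (rule sum_mono) (rule tm)
  hence "36 * real (3 * n) ^ 2 * (\<Sum>z\<in>{(x,y)\<in>S\<times>S. x\<noteq>y}. 1 / (real_of_int \<bar>s (fst z) - s (snd z)\<bar> + 1) ^ 2)
        \<le> 36 * real (3 * n) ^ 2 * (\<Sum>z\<in>{(x,y)\<in>S\<times>S. x\<noteq>y}. wt A z)" by (intro mult_left_mono) auto
  moreover have "36 * real (3 * n) ^ 2 = 324 * real n ^ 2" by (simp add: power2_eq_square)
  ultimately show ?thesis using bb unfolding S_def n_def by simp
qed

lemma sum_lines:
  fixes f :: "(real \<times> real) \<times> (real \<times> real) \<Rightarrow> real"
  assumes finL: "finite L" and lines: "\<forall>l\<in>L. is_line l" and fX: "finite X" and fY: "finite Y"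
    and G: "\<forall>l\<in>L. G l \<subseteq> {(p,q). p \<in> l \<inter> X \<and> q \<in> l \<inter> Y \<and> p \<noteq> q}" and nn: "\<forall>z. f z \<ge> 0"
  shows "(\<Sum>l\<in>L. \<Sum>z\<in>G l. f z) \<le> (\<Sum>z\<in>X\<times>Y. f z)"
proof -
  have finG: "\<forall>l\<in>L. finite (G l)"
  proof
    fix l assume "l \<in> L"
    hence "G l \<subseteq> X \<times> Y" using G by auto
    thus "finite (G l)" using fX fY by (meson finite_SigmaI finite_subset)
  qed
  have "(\<Sum>l\<in>L. \<Sum>z\<in>G l. f z) = (\<Sum>y\<in>Sigma L G. f (snd y))"
    using sum.Sigma[OF finL finG, of "\<lambda>l z. f z"] by (simp add: case_prod_beta)
  also have "\<dots> = (\<Sum>z\<in>snd ` Sigma L G. f z)"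
  proof (rule sum.reindex[symmetric, unfolded comp_def])
    show "inj_on snd (Sigma L G)"
    proof (rule inj_onI)
      fix x y assume x: "x \<in> Sigma L G" and y: "y \<in> Sigma L G" and e: "snd x = snd y"
      obtain l z where xl: "x = (l,z)" "l \<in> L" "z \<in> G l" using x by auto
      obtain l' z' where yl: "y = (l',z')" "l' \<in> L" "z' \<in> G l'" using y by auto
      have zz: "z = z'" using e xl yl by simp
      have "z \<in> {(p,q). p \<in> l \<inter> X \<and> q \<in> l \<inter> Y \<and> p \<noteq> q}" using G xl by blast
      hence h1: "fst z \<in> l" "snd z \<in> l" "fst z \<noteq> snd z" by (cases z, auto)+
      have "z \<in> {(p,q). p \<in> l' \<inter> X \<and> q \<in> l' \<inter> Y \<and> p \<noteq> q}" using G yl zz by blast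
      hence h2: "fst z \<in> l'" "snd z \<in> l'" by (cases z, auto)+
      have "l = l'" using line_two_points[of l l' "fst z" "snd z"] lines xl(2) yl(2) h1 h2 by blast
      thus "x = y" using xl yl zz by simp
    qed
  qed
  also have "\<dots> \<le> (\<Sum>z\<in>X\<times>Y. f z)"
  proof (rule sum_mono2)
    show "finite (X \<times> Y)" using fX fY by simp
    show "snd ` Sigma L G \<subseteq> X \<times> Y"
    proof
      fix y assume "y \<in> snd ` Sigma L G"
      then obtain l where "l \<in> L" "y \<in> G l" by auto
      hence "y \<in> {(p,q). p \<in> l \<inter> X \<and> q \<in> l \<inter> Y \<and> p \<noteq> q}" using G by blast
      thus "y \<in> X \<times> Y" by (cases y) auto
    qed
    show "\<And>b. b \<in> X \<times> Y - snd ` Sigma L G \<Longrightarrow> 0 \<le> f b" using nn by auto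
  qed
  finally show ?thesis .
qed

lemma rowsum:
  assumes fin: "finite A" and a0: "a0 \<in> A"
  shows "(\<Sum>a\<in>A. 1 / (real_of_int \<bar>int (rk A a0) - int (rk A a)\<bar> + 1)) \<le> 2 * (\<Sum>k<card A. 1 / (real k + 1))"
proof -
  define i0 where "i0 = rk A a0"
  have i0: "i0 < card A" unfolding i0_def by (rule rk_lt[OF fin a0])
  have "(\<Sum>a\<in>A. 1 / (real_of_int \<bar>int (rk A a0) - int (rk A a)\<bar> + 1)) = (\<Sum>a\<in>A. 1 / (\<bar>real (rk A a) - real i0\<bar> + 1))"
    unfolding i0_def by (rule sum.cong) (auto simp: abs_minus_commute)
  also have "\<dots> = (\<Sum>i\<in>rk A ` A. 1 / (\<bar>real i - real i0\<bar> + 1))"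
    by (rule sum.reindex[symmetric, unfolded comp_def]) (rule rk_inj[OF fin])
  also have "\<dots> \<le> (\<Sum>i<card A. 1 / (\<bar>real i - real i0\<bar> + 1))"
    by (rule sum_mono2) (use rk_lt[OF fin] in auto)
  also have "\<dots> \<le> 2 * (\<Sum>k<card A. 1 / (real k + 1))" by (rule harm_split[OF i0])
  finally show ?thesis .
qed

lemma wt_total:
  assumes fin: "finite A"
  shows "(\<Sum>z\<in>(A \<times> A) \<times> (A \<times> A). wt A z) \<le> real (card A) ^ 2 * (2 * (\<Sum>k<card A. 1 / (real k + 1))) ^ 2"
proof -
  define h where "h = 2 * (\<Sum>k<card A. 1 / (real k + 1))"
  define F where "F x a = 1 / (real_of_int \<bar>int (rk A x) - int (rk A a)\<bar> + 1)" for x a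
  have Fnn: "F x a \<ge> 0" for x a unfolding F_def by simp
  have row: "(\<Sum>q\<in>A \<times> A. wt A (p, q)) \<le> h ^ 2" if p: "p \<in> A \<times> A" for p
  proof -
    have "(\<Sum>q\<in>A \<times> A. wt A (p, q)) = (\<Sum>q\<in>A \<times> A. F (fst p) (fst q) * F (snd p) (snd q))"
      unfolding wt_def F_def by simp
    also have "\<dots> = (\<Sum>a\<in>A. \<Sum>b\<in>A. F (fst p) a * F (snd p) b)"
      by (simp add: sum.cartesian_product case_prod_beta)
    also have "\<dots> = (\<Sum>a\<in>A. F (fst p) a) * (\<Sum>b\<in>A. F (snd p) b)"
      by (simp add: sum_product)
    also have "\<dots> \<le> h * h"
    proof (rule mult_mono)
      show "(\<Sum>a\<in>A. F (fst p) a) \<le> h" unfolding F_def h_def using rowsum[OF fin] p by auto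
      show "(\<Sum>a\<in>A. F (snd p) a) \<le> h" unfolding F_def h_def using rowsum[OF fin] p by auto
      show "0 \<le> h" unfolding h_def by (auto intro: sum_nonneg)
      show "0 \<le> (\<Sum>a\<in>A. F (snd p) a)" using Fnn by (auto intro: sum_nonneg)
    qed
    finally show ?thesis by (simp add: power2_eq_square)
  qed
  have "(\<Sum>z\<in>(A \<times> A) \<times> (A \<times> A). wt A z) = (\<Sum>p\<in>A \<times> A. \<Sum>q\<in>A \<times> A. wt A (p, q))"
    by (simp add: sum.cartesian_product)
  also have "\<dots> \<le> (\<Sum>p\<in>A \<times> A. h ^ 2)" by (rule sum_mono) (rule row)
  also have "\<dots> = real (card A) ^ 2 * h ^ 2" by (simp add: card_cartesian_product power2_eq_square)
  finally show ?thesis unfolding h_def .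
qed




lemma alpha_split:
  fixes T p a :: real
  assumes T: "T > 0" and p: "1 \<le> p" "p \<le> 3" and a: "a \<ge> 0"
  shows "a powr p \<le> T powr (p - 1) * a + T powr (p - 3) * a ^ 3"
proof (cases "a \<le> T")
  case True
  have "a powr p = a powr (p - 1) * a powr 1" by (subst powr_add[symmetric]) simp
  also have "\<dots> = a powr (p - 1) * a" using a by (simp add: powr_one)
  also have "\<dots> \<le> T powr (p - 1) * a" using True a p by (intro mult_right_mono powr_mono2) auto
  finally show ?thesis by (smt (verit) a mult_nonneg_nonneg powr_ge_zero zero_le_power)
next
  case False
  hence aT: "T < a" by simp
  have "a powr p = a powr (p - 3) * a powr 3" by (simp add: powr_add[symmetric])
  also have "\<dots> = a powr (p - 3) * a ^ 3" using a by simp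
  also have "\<dots> \<le> T powr (p - 3) * a ^ 3" using aT T p a by (intro mult_right_mono powr_mono2') auto
  finally show ?thesis by (smt (verit) a mult_nonneg_nonneg powr_ge_zero)
qed

lemma powr_id1:
  fixes N1 N p :: real
  assumes "N1 > 0" "N > 0"
  shows "(N / N1) powr (p - 1) * (N1 ^ 2 * N ^ 2) = N1 powr (3 - p) * N powr (p + 1)"
proof -
  have "N1 ^ 2 = N1 powr 2" "N ^ 2 = N powr 2" using assms by simp_all
  hence "(N / N1) powr (p - 1) * (N1 ^ 2 * N ^ 2) = (N powr (p - 1) * N powr 2) * (N1 powr 2 / N1 powr (p - 1))"
    by (simp add: powr_divide)
  also have "\<dots> = N powr (p + 1) * N1 powr (3 - p)"
    by (simp add: powr_add[symmetric] powr_diff[symmetric] add.commute)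
  finally show ?thesis by simp
qed

lemma powr_id3:
  fixes N1 N p :: real
  assumes "N1 > 0" "N > 0"
  shows "(N / N1) powr (p - 3) * N ^ 4 = N1 powr (3 - p) * N powr (p + 1)"
proof -
  have "N ^ 4 = N powr 4" using assms by simp
  hence "(N / N1) powr (p - 3) * N ^ 4 = (N powr (p - 3) * N powr 4) * (1 / N1 powr (p - 3))"
    by (simp add: powr_divide)
  also have "1 / N1 powr (p - 3) = N1 powr (3 - p)"
    by (simp add: powr_minus_divide[symmetric])
  also have "N powr (p - 3) * N powr 4 = N powr (p + 1)"
    by (simp add: powr_add[symmetric] add.commute)
  finally show ?thesis by simp
qed

lemma wt_nn: "wt A z \<ge> 0"
  unfolding wt_def by (intro divide_nonneg_nonneg mult_nonneg_nonneg) auto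

lemma core:
  fixes A :: "nat \<Rightarrow> real set" and i :: nat and p :: real
  assumes f1: "finite (A 1)" and f2: "finite (A 2)" and f3: "finite (A 3)"
    and o12: "card (A 1) \<le> card (A 2)" and o23: "card (A 2) \<le> card (A 3)"
    and i: "i \<in> {1, 2, 3}" and p1: "1 \<le> p" and p3: "p \<le> 3"
  shows "(\<Sum>l\<in>rich_lines2 A i. real (alpha A i l) powr p)
         \<le> 9000 * real (card (A 1)) powr (3 - p) * real (card (A i)) powr (p + 1)
             * ln (2 + real (card (A 3))) powr 2"
proof -
  define L where "L = rich_lines2 A i"
  define P where "P = A i \<times> A i"
  define P1 where "P1 = A 1 \<times> A 1"
  define n where "n = card (A i)"
  define n1 where "n1 = card (A 1)"
  define n3 where "n3 = card (A 3)"
  define \<Lambda> where "\<Lambda> = ln (2 + real n3)"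
  have finA: "finite (A i)" using i f1 f2 f3 by auto
  have n1n: "n1 \<le> n" using i o12 o23 unfolding n1_def n_def by auto
  have nn3: "n \<le> n3" using i o12 o23 unfolding n3_def n_def by auto
  have Lam: "\<Lambda> \<ge> 2/3"
  proof -
    have "ln (2::real) \<le> \<Lambda>" unfolding \<Lambda>_def by simp
    thus ?thesis using ln2_ge_two_thirds by linarith
  qed
  have RHSnn: "0 \<le> 9000 * real n1 powr (3 - p) * real n powr (p + 1) * \<Lambda> powr 2" by simp
  show ?thesis
  proof (cases "finite L \<and> L \<noteq> {}")
    case False
    hence "(\<Sum>l\<in>L. real (alpha A i l) powr p) = 0" by auto
    thus ?thesis using RHSnn unfolding L_def n1_def n_def \<Lambda>_def n3_def by simp
  next
    case True
    hence finL: "finite L" and Lne: "L \<noteq> {}" by auto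
    have lines: "\<forall>l\<in>L. is_line l" unfolding L_def rich_lines2_def rich_lines_def by auto
    have al2: "\<forall>l\<in>L. alpha A i l \<ge> 2" unfolding L_def rich_lines2_def by auto
    have ual: "\<forall>l\<in>L. \<exists>u. u \<in> l \<inter> P1" unfolding L_def rich_lines2_def rich_lines_def P1_def by blast
    have alc: "alpha A i l = card (l \<inter> P)" for l unfolding alpha_def P_def ..
    obtain l0 u0 where "l0 \<in> L" "u0 \<in> l0 \<inter> P1" using Lne ual by blast
    hence "A 1 \<noteq> {}" unfolding P1_def by auto
    hence n1pos: "n1 > 0" using f1 unfolding n1_def by auto
    hence npos: "n > 0" using n1n by simp
    define h where "h = (\<Sum>k<n. 1 / (real k + 1))"
    define G where "G l = {(x,y)\<in>(l \<inter> P)\<times>(l \<inter> P). x\<noteq>y}" for l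
    have Ybound: "(\<Sum>l\<in>L. real (alpha A i l) ^ 3) \<le> 1296 * h ^ 2 * real n ^ 4"
    proof -
      have "(\<Sum>l\<in>L. real (alpha A i l) ^ 3) \<le> (\<Sum>l\<in>L. 324 * real n ^ 2 * (\<Sum>z\<in>G l. wt (A i) z))"
      proof (rule sum_mono)
        fix l assume l: "l \<in> L"
        show "real (alpha A i l) ^ 3 \<le> 324 * real n ^ 2 * (\<Sum>z\<in>G l. wt (A i) z)"
          using per_line[OF finA, of l] lines al2 l unfolding alc G_def P_def n_def by auto
      qed
      also have "\<dots> = 324 * real n ^ 2 * (\<Sum>l\<in>L. \<Sum>z\<in>G l. wt (A i) z)" by (simp add: sum_distrib_left)
      also have "\<dots> \<le> 324 * real n ^ 2 * (\<Sum>z\<in>P \<times> P. wt (A i) z)"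
      proof (rule mult_left_mono)
        show "(\<Sum>l\<in>L. \<Sum>z\<in>G l. wt (A i) z) \<le> (\<Sum>z\<in>P \<times> P. wt (A i) z)"
          by (rule sum_lines[OF finL lines]) (auto simp: P_def G_def finA wt_nn)
      qed simp
      also have "\<dots> \<le> 324 * real n ^ 2 * (real n ^ 2 * (2 * h) ^ 2)"
        using wt_total[OF finA] unfolding P_def h_def n_def by (intro mult_left_mono) auto
      also have "\<dots> = 1296 * h ^ 2 * real n ^ 4" by (simp add: power2_eq_square power4_eq_xxxx)
      finally show ?thesis .
    qed
    define G1 where "G1 l = {(x,y). x \<in> l \<inter> P1 \<and> y \<in> l \<inter> P \<and> x\<noteq>y}" for l
    have Xbound: "(\<Sum>l\<in>L. real (alpha A i l)) \<le> 2 * real n1 ^ 2 * real n ^ 2"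
    proof -
      have "(\<Sum>l\<in>L. real (alpha A i l)) \<le> (\<Sum>l\<in>L. 2 * (\<Sum>z\<in>G1 l. (1::real)))"
      proof (rule sum_mono)
        fix l assume l: "l \<in> L"
        obtain u where u: "u \<in> l \<inter> P1" using ual l by blast
        define S where "S = l \<inter> P"
        have finS: "finite S" unfolding S_def P_def using finA by auto
        have a2: "card S \<ge> 2" using al2 l unfolding alc S_def by auto
        have "card S \<le> card (S - {u}) + 1" using finS by (cases "u \<in> S") (auto simp: card_Diff_singleton_if)
        moreover have "(\<lambda>z. (u,z)) ` (S - {u}) \<subseteq> G1 l" using u unfolding G1_def S_def by auto
        moreover have "finite (G1 l)"
          by (rule finite_subset[of _ "P1 \<times> P"]) (use f1 finA in \<open>auto simp: G1_def P1_def P_def\<close>)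
        ultimately have "card S \<le> card (G1 l) + 1"
          by (metis (no_types, lifting) card_image card_mono inj_on_def prod.inject add_le_mono1 order_trans)
        hence "real (card S) \<le> 2 * real (card (G1 l))" using a2 by linarith
        thus "real (alpha A i l) \<le> 2 * (\<Sum>z\<in>G1 l. (1::real))" unfolding alc S_def by simp
      qed
      also have "\<dots> = 2 * (\<Sum>l\<in>L. \<Sum>z\<in>G1 l. (1::real))" by (simp add: sum_distrib_left)
      also have "\<dots> \<le> 2 * (\<Sum>z\<in>P1 \<times> P. (1::real))"
      proof (rule mult_left_mono)
        show "(\<Sum>l\<in>L. \<Sum>z\<in>G1 l. (1::real)) \<le> (\<Sum>z\<in>P1 \<times> P. (1::real))"
          by (rule sum_lines[OF finL lines, where f = "\<lambda>_. 1"]) (use f1 finA in \<open>auto simp: P_def P1_def G1_def\<close>)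
      qed simp
      also have "\<dots> = 2 * real n1 ^ 2 * real n ^ 2"
        unfolding P1_def P_def n1_def n_def by (simp add: card_cartesian_product power2_eq_square)
      finally show ?thesis .
    qed
    define T where "T = real n / real n1"
    have Tpos: "T > 0" unfolding T_def using n1pos npos by simp
    have "(\<Sum>l\<in>L. real (alpha A i l) powr p)
          \<le> (\<Sum>l\<in>L. T powr (p - 1) * real (alpha A i l) + T powr (p - 3) * real (alpha A i l) ^ 3)"
      by (rule sum_mono) (rule alpha_split[OF Tpos p1 p3], simp)
    also have "\<dots> = T powr (p - 1) * (\<Sum>l\<in>L. real (alpha A i l)) + T powr (p - 3) * (\<Sum>l\<in>L. real (alpha A i l) ^ 3)"
      by (simp add: sum.distrib sum_distrib_left)
    also have "\<dots> \<le> T powr (p - 1) * (2 * real n1 ^ 2 * real n ^ 2) + T powr (p - 3) * (1296 * h ^ 2 * real n ^ 4)"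
      using Xbound Ybound by (intro add_mono mult_left_mono) auto
    also have "\<dots> = (2 + 1296 * h ^ 2) * (real n1 powr (3 - p) * real n powr (p + 1))"
    proof -
      have e1: "T powr (p - 1) * (real n1 ^ 2 * real n ^ 2) = real n1 powr (3 - p) * real n powr (p + 1)"
        unfolding T_def by (rule powr_id1) (use n1pos npos in auto)
      have e3: "T powr (p - 3) * real n ^ 4 = real n1 powr (3 - p) * real n powr (p + 1)"
        unfolding T_def by (rule powr_id3) (use n1pos npos in auto)
      have "T powr (p - 1) * (2 * real n1 ^ 2 * real n ^ 2) = 2 * (T powr (p - 1) * (real n1 ^ 2 * real n ^ 2))" by simp
      moreover have "T powr (p - 3) * (1296 * h ^ 2 * real n ^ 4) = 1296 * h ^ 2 * (T powr (p - 3) * real n ^ 4)" by simp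
      ultimately show ?thesis unfolding e1 e3 by (simp add: algebra_simps)
    qed
    also have "\<dots> \<le> 9000 * \<Lambda> ^ 2 * (real n1 powr (3 - p) * real n powr (p + 1))"
    proof (rule mult_right_mono)
      have hnn: "h \<ge> 0" unfolding h_def by (auto intro: sum_nonneg)
      have "h \<le> 1 + ln (real n)" unfolding h_def by (rule harm_le[OF npos])
      also have "ln (real n) \<le> \<Lambda>" unfolding \<Lambda>_def using npos nn3 by simp
      hence "1 + ln (real n) \<le> 1 + \<Lambda>" by simp
      finally have "h \<le> 5/2 * \<Lambda>" using Lam by linarith
      hence "h ^ 2 \<le> (5/2 * \<Lambda>) ^ 2" using hnn by (intro power_mono) auto
      hence "h ^ 2 \<le> 25/4 * \<Lambda> ^ 2" by (simp add: power2_eq_square)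
      moreover have "4/9 \<le> \<Lambda> ^ 2" using Lam power_mono[of "2/3" \<Lambda> 2] by (simp add: power2_eq_square)
      ultimately show "2 + 1296 * h ^ 2 \<le> 9000 * \<Lambda> ^ 2" by linarith
    qed simp
    also have "\<dots> = 9000 * real n1 powr (3 - p) * real n powr (p + 1) * \<Lambda> powr 2"
      using Lam by simp
    finally show ?thesis unfolding L_def n1_def n_def \<Lambda>_def n3_def .
  qed
qed

theorem mainTheorem3:
  shows "\<exists>C c::real. C > 0 \<and> c > 0 \<and>
    (\<forall>A :: nat \<Rightarrow> real set. \<forall>i p.
       finite (A 1) \<and> finite (A 2) \<and> finite (A 3) \<and>
       card (A 1) \<le> card (A 2) \<and> card (A 2) \<le> card (A 3) \<and>
       i \<in> {1, 2, 3} \<and> 1 \<le> p \<and> p \<le> 3 \<longrightarrow>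
       (\<Sum>l\<in>rich_lines2 A i. real (alpha A i l) powr p)
         \<le> C * real (card (A 1)) powr (3 - p) * real (card (A i)) powr (p + 1)
             * ln (2 + real (card (A 3))) powr c)"
  by (rule exI[of _ 9000], rule exI[of _ 2]) (use core in auto)


end
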